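(* The collection $\{\mathcal H_X^*\}_{X\in Ob(\mathscr C)}$ is a set of projective generators for ${^\mathscr C}Ctr$.
   Context: $K$ is a field; $(U',U):=Hom_K(U',U)$. A coalgebra $\mathscr C$ with several objects has a set $Ob(\mathscr C)$, vector spaces $\mathscr C(X,Y)$, and coassociative, counital maps $\delta_{XYZ}:\mathscr C(X,Z)\to \mathscr C(Y,Z)\otimes \mathscr C(X,Y)$, $\epsilon_X:\mathscr C(X,X)\to K$. ${^\mathscr C}Ctr$ is the category of left $\mathscr C$-contramodules: families of vector spaces $\mathcal M(X)$ with maps $\pi_{XY}:(\mathscr C(X,Y),\mathcal M(Y))\to\mathcal M(X)$ satisfying $\pi_{XZ}\circ(\delta_{XYZ},\mathcal M(Z))=\pi_{XY}\circ(\mathscr C(X,Y),\pi_{YZ})$ (via the hom-tensor identification) and $\pi_{XX}\circ(\epsilon_X,\mathcal M(X))=id$; morphisms are families of linear maps compatible with the $\pi$'s. It is abelian with kernels and cokernels computed objectwise. $\mathcal H_X^*$ denotes the contramodule $Y\mapsto (\mathscr C(Y,X),K)$ with structure maps induced by $(\delta_{YZX},K)$. *)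

theory Defs
  imports Complex_Main "HOL-Library.Function_Algebras"
begin

text \<open>
Coalgebra with several objects, presented by bases:
the objects are the elements of the type 'o; the vector space C(X,Y) is the
free K-vector space on the basis set Bas X Y.  The comultiplication
delta_XYZ : C(X,Z) -> C(Y,Z) (x) C(X,Y) is given by structure constants:
delta_XYZ(e_c) = sum over (a,b) of d X Y Z c a b . e_a (x) e_b
(a in Bas Y Z, b in Bas X Y), and the counit by eps X c = epsilon_X(e_c).
\<close>

definition dsupp :: "('o \<Rightarrow> 'o \<Rightarrow> 'b set) \<Rightarrow> ('o \<Rightarrow> 'o \<Rightarrow> 'o \<Rightarrow> 'b \<Rightarrow> 'b \<Rightarrow> 'b \<Rightarrow> 'k::zero)
     \<Rightarrow> 'o \<Rightarrow> 'o \<Rightarrow> 'o \<Rightarrow> 'b \<Rightarrow> ('b \<times> 'b) set" where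
  "dsupp Bas d X Y Z c = {(a, b). a \<in> Bas Y Z \<and> b \<in> Bas X Y \<and> d X Y Z c a b \<noteq> 0}"

definition coalg :: "('o \<Rightarrow> 'o \<Rightarrow> 'b set) \<Rightarrow> ('o \<Rightarrow> 'o \<Rightarrow> 'o \<Rightarrow> 'b \<Rightarrow> 'b \<Rightarrow> 'b \<Rightarrow> 'k::field)
     \<Rightarrow> ('o \<Rightarrow> 'b \<Rightarrow> 'k) \<Rightarrow> bool" where
  "coalg Bas d eps \<longleftrightarrow>
     (\<forall>X Y Z c. c \<in> Bas X Z \<longrightarrow> finite (dsupp Bas d X Y Z c)) \<and>
     (\<forall>W X Y Z c a b e. c \<in> Bas W Z \<longrightarrow> a \<in> Bas Y Z \<longrightarrow> b \<in> Bas X Y \<longrightarrow> e \<in> Bas W X \<longrightarrow>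
        (\<Sum>u\<in>{u \<in> Bas X Z. d W X Z c u e \<noteq> 0}. d W X Z c u e * d X Y Z u a b)
      = (\<Sum>v\<in>{v \<in> Bas W Y. d W Y Z c a v \<noteq> 0}. d W Y Z c a v * d W X Y v b e)) \<and>
     (\<forall>X Z c b. c \<in> Bas X Z \<longrightarrow> b \<in> Bas X Z \<longrightarrow>
        (\<Sum>a\<in>{a \<in> Bas Z Z. d X Z Z c a b \<noteq> 0}. eps Z a * d X Z Z c a b) = (if b = c then 1 else 0)) \<and>
     (\<forall>X Z c a. c \<in> Bas X Z \<longrightarrow> a \<in> Bas X Z \<longrightarrow>
        (\<Sum>b\<in>{b \<in> Bas X X. d X X Z c a b \<noteq> 0}. d X X Z c a b * eps X b) = (if a = c then 1 else 0))"

text \<open>Hom_K(C(X,Y), A): linear maps on the free space = functions on the basis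
(represented as functions that vanish off the basis).\<close>
definition HomB :: "('o \<Rightarrow> 'o \<Rightarrow> 'b set) \<Rightarrow> 'o \<Rightarrow> 'o \<Rightarrow> 'm::zero set \<Rightarrow> ('b \<Rightarrow> 'm) set" where
  "HomB Bas X Y A = {g. (\<forall>c\<in>Bas X Y. g c \<in> A) \<and> (\<forall>c. c \<notin> Bas X Y \<longrightarrow> g c = 0)}"

text \<open>Left C-contramodule: vector spaces M X (subspaces of an ambient K-vector space
with scalar multiplication sM), and linear maps pi X Y : Hom(C(X,Y), M Y) -> M X.\<close>
definition contramod :: "('o \<Rightarrow> 'o \<Rightarrow> 'b set) \<Rightarrow> ('o \<Rightarrow> 'o \<Rightarrow> 'o \<Rightarrow> 'b \<Rightarrow> 'b \<Rightarrow> 'b \<Rightarrow> 'k::field)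
     \<Rightarrow> ('o \<Rightarrow> 'b \<Rightarrow> 'k) \<Rightarrow> ('k \<Rightarrow> 'm::ab_group_add \<Rightarrow> 'm) \<Rightarrow> ('o \<Rightarrow> 'm set)
     \<Rightarrow> ('o \<Rightarrow> 'o \<Rightarrow> ('b \<Rightarrow> 'm) \<Rightarrow> 'm) \<Rightarrow> bool" where
  "contramod Bas d eps sM M p \<longleftrightarrow>
     vector_space sM \<and>
     (\<forall>X. module.subspace sM (M X)) \<and>
     (\<forall>X Y. \<forall>g\<in>HomB Bas X Y (M Y). p X Y g \<in> M X) \<and>
     (\<forall>X Y. \<forall>g\<in>HomB Bas X Y (M Y). \<forall>h\<in>HomB Bas X Y (M Y).
         p X Y (\<lambda>c. g c + h c) = p X Y g + p X Y h) \<and>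
     (\<forall>X Y k. \<forall>g\<in>HomB Bas X Y (M Y). p X Y (\<lambda>c. sM k (g c)) = sM k (p X Y g)) \<and>
     (\<forall>X Y Z (\<phi> :: 'b \<Rightarrow> 'b \<Rightarrow> 'm).
         (\<forall>a\<in>Bas Y Z. \<forall>b\<in>Bas X Y. \<phi> a b \<in> M Z) \<longrightarrow>
         p X Z (\<lambda>c. if c \<in> Bas X Z
                      then (\<Sum>(a, b)\<in>dsupp Bas d X Y Z c. sM (d X Y Z c a b) (\<phi> a b))
                      else 0)
       = p X Y (\<lambda>b. if b \<in> Bas X Y
                      then p Y Z (\<lambda>a. if a \<in> Bas Y Z then \<phi> a b else 0)
                      else 0)) \<and>
     (\<forall>X. \<forall>m\<in>M X. p X X (\<lambda>c. if c \<in> Bas X X then sM (eps X c) m else 0) = m)"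

definition cmor :: "('o \<Rightarrow> 'o \<Rightarrow> 'b set)
     \<Rightarrow> ('k \<Rightarrow> 'm::ab_group_add \<Rightarrow> 'm) \<Rightarrow> ('o \<Rightarrow> 'm set) \<Rightarrow> ('o \<Rightarrow> 'o \<Rightarrow> ('b \<Rightarrow> 'm) \<Rightarrow> 'm)
     \<Rightarrow> ('k \<Rightarrow> 'n::ab_group_add \<Rightarrow> 'n) \<Rightarrow> ('o \<Rightarrow> 'n set) \<Rightarrow> ('o \<Rightarrow> 'o \<Rightarrow> ('b \<Rightarrow> 'n) \<Rightarrow> 'n)
     \<Rightarrow> ('o \<Rightarrow> 'm \<Rightarrow> 'n) \<Rightarrow> bool" where
  "cmor Bas sM M p sN N q f \<longleftrightarrow>
     (\<forall>X. \<forall>x\<in>M X. f X x \<in> N X) \<and>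
     (\<forall>X. \<forall>x\<in>M X. \<forall>y\<in>M X. f X (x + y) = f X x + f X y) \<and>
     (\<forall>X k. \<forall>x\<in>M X. f X (sM k x) = sN k (f X x)) \<and>
     (\<forall>X Y. \<forall>g\<in>HomB Bas X Y (M Y).
        f X (p X Y g) = q X Y (\<lambda>c. if c \<in> Bas X Y then f Y (g c) else 0))"

text \<open>The contramodule H_X^* : Y |-> Hom_K(C(Y,X), K), with structure maps induced by
(delta_YZX, K).  Elements of Hom_K(C(Y,X),K) are functions on Bas Y X (zero elsewhere).\<close>
definition dscale :: "'k::field \<Rightarrow> ('b \<Rightarrow> 'k) \<Rightarrow> ('b \<Rightarrow> 'k)" where
  "dscale k f = (\<lambda>b. k * f b)"

definition Hdual :: "('o \<Rightarrow> 'o \<Rightarrow> 'b set) \<Rightarrow> 'o \<Rightarrow> 'o \<Rightarrow> ('b \<Rightarrow> 'k::field) set" where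
  "Hdual Bas X Y = {f. \<forall>b. b \<notin> Bas Y X \<longrightarrow> f b = 0}"

definition Hpi :: "('o \<Rightarrow> 'o \<Rightarrow> 'b set) \<Rightarrow> ('o \<Rightarrow> 'o \<Rightarrow> 'o \<Rightarrow> 'b \<Rightarrow> 'b \<Rightarrow> 'b \<Rightarrow> 'k::field)
     \<Rightarrow> 'o \<Rightarrow> 'o \<Rightarrow> 'o \<Rightarrow> ('b \<Rightarrow> ('b \<Rightarrow> 'k)) \<Rightarrow> ('b \<Rightarrow> 'k)" where
  "Hpi Bas d X Y Z g = (\<lambda>c. if c \<in> Bas Y X
       then (\<Sum>(a, b)\<in>dsupp Bas d Y Z X c. d Y Z X c a b * g b a) else 0)"

end

theory Submission
  imports Defs
begin

lemma swap4a: "(\<Sum>v\<in>V. \<Sum>b\<in>B. \<Sum>u\<in>U. \<Sum>a\<in>A. f v b u a) = (\<Sum>u\<in>U. \<Sum>a\<in>A. \<Sum>b\<in>B. \<Sum>v\<in>V. (f v b u a :: 'a::comm_monoid_add))"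
proof -
  have "(\<Sum>v\<in>V. \<Sum>b\<in>B. \<Sum>u\<in>U. \<Sum>a\<in>A. f v b u a) = (\<Sum>v\<in>V. \<Sum>u\<in>U. \<Sum>b\<in>B. \<Sum>a\<in>A. f v b u a)"
    by (rule sum.cong[OF refl], rule sum.swap)
  also have "\<dots> = (\<Sum>u\<in>U. \<Sum>v\<in>V. \<Sum>b\<in>B. \<Sum>a\<in>A. f v b u a)" by (rule sum.swap)
  also have "\<dots> = (\<Sum>u\<in>U. \<Sum>v\<in>V. \<Sum>a\<in>A. \<Sum>b\<in>B. f v b u a)"
    by (rule sum.cong[OF refl], rule sum.cong[OF refl], rule sum.swap)
  also have "\<dots> = (\<Sum>u\<in>U. \<Sum>a\<in>A. \<Sum>v\<in>V. \<Sum>b\<in>B. f v b u a)"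
    by (rule sum.cong[OF refl], rule sum.swap)
  also have "\<dots> = (\<Sum>u\<in>U. \<Sum>a\<in>A. \<Sum>b\<in>B. \<Sum>v\<in>V. f v b u a)"
    by (rule sum.cong[OF refl], rule sum.cong[OF refl], rule sum.swap)
  finally show ?thesis .
qed
lemma swap4b: "(\<Sum>u\<in>U. \<Sum>c\<in>C. \<Sum>a\<in>A. \<Sum>b\<in>B. f u c a b) = (\<Sum>u\<in>U. \<Sum>a\<in>A. \<Sum>b\<in>B. \<Sum>c\<in>C. (f u c a b :: 'a::comm_monoid_add))"
proof -
  have "(\<Sum>u\<in>U. \<Sum>c\<in>C. \<Sum>a\<in>A. \<Sum>b\<in>B. f u c a b) = (\<Sum>u\<in>U. \<Sum>a\<in>A. \<Sum>c\<in>C. \<Sum>b\<in>B. f u c a b)"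
    by (rule sum.cong[OF refl], rule sum.swap)
  also have "\<dots> = (\<Sum>u\<in>U. \<Sum>a\<in>A. \<Sum>b\<in>B. \<Sum>c\<in>C. f u c a b)"
    by (rule sum.cong[OF refl], rule sum.cong[OF refl], rule sum.swap)
  finally show ?thesis .
qed


lemma sum_fun_app: "(sum f A) x = (\<Sum>a\<in>A. f a x)"
  by (induct A rule: infinite_finite_induct) auto

lemma dsupp_fin: "coalg Bas d eps \<Longrightarrow> c \<in> Bas X Z \<Longrightarrow> finite (dsupp Bas d X Y Z c)"
  unfolding coalg_def by blast

lemma dsupp_ext:
  assumes "finite A" "finite B" "A \<subseteq> Bas Y Z" "B \<subseteq> Bas X Y" "dsupp Bas d X Y Z c \<subseteq> A \<times> B"
  shows "(\<Sum>(a,b)\<in>dsupp Bas d X Y Z c. (d X Y Z c a b::'k::field) * F a b) = (\<Sum>a\<in>A. \<Sum>b\<in>B. d X Y Z c a b * F a b)"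
proof -
  have "(\<Sum>(a,b)\<in>dsupp Bas d X Y Z c. d X Y Z c a b * F a b) = (\<Sum>(a,b)\<in>A\<times>B. d X Y Z c a b * F a b)"
    using assms by (intro sum.mono_neutral_left) (auto simp: dsupp_def)
  then show ?thesis by (simp add: sum.cartesian_product)
qed

lemma dscale_sum_app: "(\<Sum>(a,b)\<in>S. dscale (k a b) (\<phi> a b)) u = (\<Sum>(a,b)\<in>S. k a b * \<phi> a b u)"
  by (simp add: sum_fun_app dscale_def split_def)

lemma dsupp_sub: "dsupp Bas d X Y Z c \<subseteq> Bas Y Z \<times> Bas X Y"
  by (auto simp: dsupp_def)

lemma vs_dscale: "vector_space (dscale :: 'k::field \<Rightarrow> ('b \<Rightarrow> 'k) \<Rightarrow> _)"
  by unfold_locales (auto simp: dscale_def fun_eq_iff algebra_simps)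


lemma H_assoc:
  fixes d :: "'o \<Rightarrow> 'o \<Rightarrow> 'o \<Rightarrow> 'b \<Rightarrow> 'b \<Rightarrow> 'b \<Rightarrow> 'k::field"
  assumes co: "coalg Bas d eps"
    and phi: "\<forall>a\<in>Bas Y Z. \<forall>b\<in>Bas X Y. \<phi> a b \<in> Hdual Bas Q Z"
    and w: "w \<in> Bas X Q"
  shows "(\<Sum>(u,c)\<in>dsupp Bas d X Z Q w. d X Z Q w u c *
            (if c \<in> Bas X Z then (\<Sum>(a, b)\<in>dsupp Bas d X Y Z c. dscale (d X Y Z c a b) (\<phi> a b)) else 0) u)
       = (\<Sum>(v,b)\<in>dsupp Bas d X Y Q w. d X Y Q w v b *
            (if b \<in> Bas X Y then Hpi Bas d Q Y Z (\<lambda>a. if a \<in> Bas Y Z then \<phi> a b else 0) else 0) v)"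
proof -
  define CC where "CC = snd ` dsupp Bas d X Z Q w"
  define VV where "VV = fst ` dsupp Bas d X Y Q w"
  define UU where "UU = fst ` dsupp Bas d X Z Q w \<union> (\<Union>v\<in>VV. fst ` dsupp Bas d Y Z Q v)"
  define AA where "AA = (\<Union>c\<in>CC. fst ` dsupp Bas d X Y Z c) \<union> (\<Union>v\<in>VV. snd ` dsupp Bas d Y Z Q v)"
  define BB where "BB = snd ` dsupp Bas d X Y Q w \<union> (\<Union>c\<in>CC. snd ` dsupp Bas d X Y Z c)"
  have CCs: "CC \<subseteq> Bas X Z" and VVs: "VV \<subseteq> Bas Y Q" and UUs: "UU \<subseteq> Bas Z Q"
    and AAs: "AA \<subseteq> Bas Y Z" and BBs: "BB \<subseteq> Bas X Y"
    unfolding CC_def VV_def UU_def AA_def BB_def dsupp_def by auto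
  have fw1: "finite (dsupp Bas d X Z Q w)" and fw2: "finite (dsupp Bas d X Y Q w)"
    using dsupp_fin[OF co w] by auto
  have CCf: "finite CC" and VVf: "finite VV" using fw1 fw2 CC_def VV_def by auto
  have UUf: "finite UU" unfolding UU_def using fw1 VVf VVs dsupp_fin[OF co] by blast
  have AAf: "finite AA" unfolding AA_def using CCf VVf VVs CCs dsupp_fin[OF co] by blast
  have BBf: "finite BB" unfolding BB_def using CCf fw2 CCs dsupp_fin[OF co] by blast
  have s1: "dsupp Bas d X Z Q w \<subseteq> UU \<times> CC" unfolding UU_def CC_def by force
  have s2: "dsupp Bas d X Y Q w \<subseteq> VV \<times> BB" unfolding VV_def BB_def by force
  have s3: "c \<in> CC \<Longrightarrow> dsupp Bas d X Y Z c \<subseteq> AA \<times> BB" for c unfolding AA_def BB_def by force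
  have s4: "v \<in> VV \<Longrightarrow> dsupp Bas d Y Z Q v \<subseteq> UU \<times> AA" for v unfolding AA_def UU_def by force
  have L: "(\<Sum>(u,c)\<in>dsupp Bas d X Z Q w. d X Z Q w u c *
            (if c \<in> Bas X Z then (\<Sum>(a, b)\<in>dsupp Bas d X Y Z c. dscale (d X Y Z c a b) (\<phi> a b)) else 0) u)
     = (\<Sum>u\<in>UU. \<Sum>c\<in>CC. d X Z Q w u c * (\<Sum>a\<in>AA. \<Sum>b\<in>BB. d X Y Z c a b * \<phi> a b u))"
    apply (subst dsupp_ext[OF UUf CCf UUs CCs s1])
    apply (intro sum.cong refl)
    using CCs apply (simp add: subset_iff dscale_sum_app)
    apply (subst dsupp_ext[OF AAf BBf AAs BBs s3])
    by auto
  also have "\<dots> = (\<Sum>u\<in>UU. \<Sum>a\<in>AA. \<Sum>b\<in>BB. (\<Sum>c\<in>CC. d X Z Q w u c * d X Y Z c a b) * \<phi> a b u)"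
    unfolding sum_distrib_left sum_distrib_right
    by (rule trans[OF _ swap4b]) (simp add: mult_ac)
  finally have L2: "(\<Sum>(u,c)\<in>dsupp Bas d X Z Q w. d X Z Q w u c *
            (if c \<in> Bas X Z then (\<Sum>(a, b)\<in>dsupp Bas d X Y Z c. dscale (d X Y Z c a b) (\<phi> a b)) else 0) u)
     = (\<Sum>u\<in>UU. \<Sum>a\<in>AA. \<Sum>b\<in>BB. (\<Sum>c\<in>CC. d X Z Q w u c * d X Y Z c a b) * \<phi> a b u)" .
  have R: "(\<Sum>(v,b)\<in>dsupp Bas d X Y Q w. d X Y Q w v b *
            (if b \<in> Bas X Y then Hpi Bas d Q Y Z (\<lambda>a. if a \<in> Bas Y Z then \<phi> a b else 0) else 0) v)
      = (\<Sum>v\<in>VV. \<Sum>b\<in>BB. d X Y Q w v b * (\<Sum>u\<in>UU. \<Sum>a\<in>AA. d Y Z Q v u a * \<phi> a b u))"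
    apply (subst dsupp_ext[OF VVf BBf VVs BBs s2])
    apply (intro sum.cong refl)
    using VVs BBs apply (simp add: subset_iff Hpi_def)
    apply (subst dsupp_ext[OF UUf AAf UUs AAs s4])
    using AAs by (auto intro!: sum.cong simp: subset_iff)
  also have "\<dots> = (\<Sum>u\<in>UU. \<Sum>a\<in>AA. \<Sum>b\<in>BB. (\<Sum>v\<in>VV. d X Y Q w v b * d Y Z Q v u a) * \<phi> a b u)"
    unfolding sum_distrib_left sum_distrib_right
    by (rule trans[OF _ swap4a]) (simp add: mult_ac)
  finally have R2: "(\<Sum>(v,b)\<in>dsupp Bas d X Y Q w. d X Y Q w v b *
            (if b \<in> Bas X Y then Hpi Bas d Q Y Z (\<lambda>a. if a \<in> Bas Y Z then \<phi> a b else 0) else 0) v)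
      = (\<Sum>u\<in>UU. \<Sum>a\<in>AA. \<Sum>b\<in>BB. (\<Sum>v\<in>VV. d X Y Q w v b * d Y Z Q v u a) * \<phi> a b u)" .
  have coef: "(\<Sum>c\<in>CC. d X Z Q w u c * d X Y Z c a b) = (\<Sum>v\<in>VV. d X Y Q w v b * d Y Z Q v u a)"
    if u: "u \<in> Bas Z Q" and a: "a \<in> Bas Y Z" and b: "b \<in> Bas X Y" for u a b
  proof -
    have ax: "(\<Sum>v\<in>{v \<in> Bas Y Q. d X Y Q w v b \<noteq> 0}. d X Y Q w v b * d Y Z Q v u a)
       = (\<Sum>c\<in>{c \<in> Bas X Z. d X Z Q w u c \<noteq> 0}. d X Z Q w u c * d X Y Z c a b)"
      using co w u a b unfolding coalg_def by blast
    have e1: "(\<Sum>c\<in>CC. d X Z Q w u c * d X Y Z c a b) = (\<Sum>c\<in>{c \<in> Bas X Z. d X Z Q w u c \<noteq> 0}. d X Z Q w u c * d X Y Z c a b)"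
      apply (rule sum.mono_neutral_right[OF CCf])
      using CCs u unfolding CC_def dsupp_def by force+
    have e2: "(\<Sum>v\<in>VV. d X Y Q w v b * d Y Z Q v u a) = (\<Sum>v\<in>{v \<in> Bas Y Q. d X Y Q w v b \<noteq> 0}. d X Y Q w v b * d Y Z Q v u a)"
      apply (rule sum.mono_neutral_right[OF VVf])
      using VVs b unfolding VV_def dsupp_def by force+
    show ?thesis using ax e1 e2 by simp
  qed
  show ?thesis unfolding L2 R2
    using UUs AAs BBs coef by (auto intro!: sum.cong simp: subset_iff)
qed


lemma counitA:
  fixes d :: "'o \<Rightarrow> 'o \<Rightarrow> 'o \<Rightarrow> 'b \<Rightarrow> 'b \<Rightarrow> 'b \<Rightarrow> 'k::field"
  assumes co: "coalg Bas d eps" and w: "w \<in> Bas X Q"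
  shows "(\<Sum>(a,b)\<in>dsupp Bas d X X Q w. d X X Q w a b * (if b \<in> Bas X X then dscale (eps X b) m else 0) a) = m w"
proof -
  define A where "A = insert w (fst ` dsupp Bas d X X Q w)"
  define B where "B = snd ` dsupp Bas d X X Q w"
  have fw: "finite (dsupp Bas d X X Q w)" using dsupp_fin[OF co w] .
  have Af: "finite A" and Bf: "finite B" using fw A_def B_def by auto
  have As: "A \<subseteq> Bas X Q" and Bs: "B \<subseteq> Bas X X" using w unfolding A_def B_def dsupp_def by auto
  have s: "dsupp Bas d X X Q w \<subseteq> A \<times> B" unfolding A_def B_def by force
  have "(\<Sum>(a,b)\<in>dsupp Bas d X X Q w. d X X Q w a b * (if b \<in> Bas X X then dscale (eps X b) m else 0) a)
      = (\<Sum>a\<in>A. \<Sum>b\<in>B. d X X Q w a b * (if b \<in> Bas X X then dscale (eps X b) m else 0) a)"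
    by (rule dsupp_ext[OF Af Bf As Bs s])
  also have "\<dots> = (\<Sum>a\<in>A. m a * (\<Sum>b\<in>B. d X X Q w a b * eps X b))"
    using Bs by (auto intro!: sum.cong simp: subset_iff dscale_def sum_distrib_left mult_ac)
  also have "\<dots> = (\<Sum>a\<in>A. m a * (if a = w then 1 else 0))"
  proof (intro sum.cong refl)
    fix a assume a: "a \<in> A"
    have ax: "(\<Sum>b\<in>{b \<in> Bas X X. d X X Q w a b \<noteq> 0}. d X X Q w a b * eps X b) = (if a = w then 1 else 0)"
      using co w subsetD[OF As a] unfolding coalg_def by blast
    have "(\<Sum>b\<in>B. d X X Q w a b * eps X b) = (\<Sum>b\<in>{b \<in> Bas X X. d X X Q w a b \<noteq> 0}. d X X Q w a b * eps X b)"
      apply (rule sum.mono_neutral_right[OF Bf])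
      using Bs a As unfolding B_def dsupp_def by force+
    then show "m a * (\<Sum>b\<in>B. d X X Q w a b * eps X b) = m a * (if a = w then 1 else 0)" using ax by simp
  qed
  also have "\<dots> = (\<Sum>a\<in>A. if a = w then m a else 0)" by (rule sum.cong) auto
  also have "\<dots> = m w" using Af by (simp add: A_def sum.delta)
  finally show ?thesis .
qed

lemma counitB:
  fixes d :: "'o \<Rightarrow> 'o \<Rightarrow> 'o \<Rightarrow> 'b \<Rightarrow> 'b \<Rightarrow> 'b \<Rightarrow> 'k::field"
  assumes co: "coalg Bas d eps" and w: "w \<in> Bas Y X"
  shows "(\<Sum>(a,b)\<in>dsupp Bas d Y X X w. d Y X X w a b *
     (if b \<in> Bas Y X then dscale (\<phi> b) (\<lambda>c. if c \<in> Bas X X then eps X c else 0) else 0) a) = \<phi> w"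
proof -
  define A where "A = fst ` dsupp Bas d Y X X w"
  define B where "B = insert w (snd ` dsupp Bas d Y X X w)"
  have fw: "finite (dsupp Bas d Y X X w)" using dsupp_fin[OF co w] .
  have Af: "finite A" and Bf: "finite B" using fw A_def B_def by auto
  have As: "A \<subseteq> Bas X X" and Bs: "B \<subseteq> Bas Y X" using w unfolding A_def B_def dsupp_def by auto
  have s: "dsupp Bas d Y X X w \<subseteq> A \<times> B" unfolding A_def B_def by force
  have "(\<Sum>(a,b)\<in>dsupp Bas d Y X X w. d Y X X w a b *
     (if b \<in> Bas Y X then dscale (\<phi> b) (\<lambda>c. if c \<in> Bas X X then eps X c else 0) else 0) a)
      = (\<Sum>a\<in>A. \<Sum>b\<in>B. d Y X X w a b *
     (if b \<in> Bas Y X then dscale (\<phi> b) (\<lambda>c. if c \<in> Bas X X then eps X c else 0) else 0) a)"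
    by (rule dsupp_ext[OF Af Bf As Bs s])
  also have "\<dots> = (\<Sum>b\<in>B. \<phi> b * (\<Sum>a\<in>A. eps X a * d Y X X w a b))"
    apply (subst sum.swap)
    using Bs As by (auto intro!: sum.cong simp: subset_iff dscale_def sum_distrib_left mult_ac)
  also have "\<dots> = (\<Sum>b\<in>B. \<phi> b * (if b = w then 1 else 0))"
  proof (intro sum.cong refl)
    fix b assume b: "b \<in> B"
    have ax: "(\<Sum>a\<in>{a \<in> Bas X X. d Y X X w a b \<noteq> 0}. eps X a * d Y X X w a b) = (if b = w then 1 else 0)"
      using co w subsetD[OF Bs b] unfolding coalg_def by blast
    have "(\<Sum>a\<in>A. eps X a * d Y X X w a b) = (\<Sum>a\<in>{a \<in> Bas X X. d Y X X w a b \<noteq> 0}. eps X a * d Y X X w a b)"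
      apply (rule sum.mono_neutral_right[OF Af])
      using As b Bs unfolding A_def dsupp_def by force+
    then show "\<phi> b * (\<Sum>a\<in>A. eps X a * d Y X X w a b) = \<phi> b * (if b = w then 1 else 0)" using ax by simp
  qed
  also have "\<dots> = (\<Sum>b\<in>B. if b = w then \<phi> b else 0)" by (rule sum.cong) auto
  also have "\<dots> = \<phi> w" using Bf by (simp add: B_def sum.delta)
  finally show ?thesis .
qed

lemma H_contramod:
  fixes d :: "'o \<Rightarrow> 'o \<Rightarrow> 'o \<Rightarrow> 'b \<Rightarrow> 'b \<Rightarrow> 'b \<Rightarrow> 'k::field"
  assumes co: "coalg Bas d eps"
  shows "contramod Bas d eps dscale (Hdual Bas Q) (Hpi Bas d Q)"
  unfolding contramod_def
proof (intro conjI allI ballI impI)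
  show "vector_space (dscale :: 'k \<Rightarrow> _)" by (rule vs_dscale)
  show "module.subspace dscale (Hdual Bas Q X)" for X
    unfolding module.subspace_def[OF vs_dscale[unfolded module_iff_vector_space[symmetric]]]
    by (auto simp: Hdual_def dscale_def)
  show "Hpi Bas d Q X Y g \<in> Hdual Bas Q X" for X Y g
    by (auto simp: Hdual_def Hpi_def)
  show "Hpi Bas d Q X Y (\<lambda>c. g c + h c) = Hpi Bas d Q X Y g + Hpi Bas d Q X Y h" for X Y g h
    by (auto simp: Hpi_def fun_eq_iff algebra_simps sum.distrib split_def)
  show "Hpi Bas d Q X Y (\<lambda>c. dscale k (g c)) = dscale k (Hpi Bas d Q X Y g)" for X Y k g
    by (auto simp: Hpi_def fun_eq_iff dscale_def sum_distrib_left split_def mult_ac)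
  show "Hpi Bas d Q X Z (\<lambda>c. if c \<in> Bas X Z then \<Sum>(a, b)\<in>dsupp Bas d X Y Z c. dscale (d X Y Z c a b) (\<phi> a b) else 0) =
        Hpi Bas d Q X Y (\<lambda>b. if b \<in> Bas X Y then Hpi Bas d Q Y Z (\<lambda>a. if a \<in> Bas Y Z then \<phi> a b else 0) else 0)"
    if "\<forall>a\<in>Bas Y Z. \<forall>b\<in>Bas X Y. \<phi> a b \<in> Hdual Bas Q Z" for X Y Z \<phi>
    unfolding Hpi_def[of Bas d Q X Z] Hpi_def[of Bas d Q X Y]
    using H_assoc[OF co that] by auto
  show "Hpi Bas d Q X X (\<lambda>c. if c \<in> Bas X X then dscale (eps X c) m else 0) = m" if "m \<in> Hdual Bas Q X" for X m
    using that counitA[OF co] by (auto simp: Hpi_def fun_eq_iff Hdual_def)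
qed


definition yon :: "('o \<Rightarrow> 'o \<Rightarrow> 'b set) \<Rightarrow> ('k \<Rightarrow> 'm \<Rightarrow> 'm) \<Rightarrow> ('o \<Rightarrow> 'o \<Rightarrow> ('b \<Rightarrow> 'm) \<Rightarrow> 'm)
   \<Rightarrow> 'o \<Rightarrow> 'm::zero \<Rightarrow> 'o \<Rightarrow> ('b \<Rightarrow> 'k) \<Rightarrow> 'm" where
  "yon Bas sM p Q m = (\<lambda>Y \<phi>. p Y Q (\<lambda>c. if c \<in> Bas Y Q then sM (\<phi> c) m else 0))"

lemma yon_cmor:
  fixes d :: "'o \<Rightarrow> 'o \<Rightarrow> 'o \<Rightarrow> 'b \<Rightarrow> 'b \<Rightarrow> 'b \<Rightarrow> 'k::field"
    and sM :: "'k \<Rightarrow> 'm::ab_group_add \<Rightarrow> 'm"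
  assumes co: "coalg Bas d eps" and cm: "contramod Bas d eps sM M p" and m: "m \<in> M Q"
  shows "cmor Bas dscale (Hdual Bas Q) (Hpi Bas d Q) sM M p (yon Bas sM p Q m)"
proof -
  have vs: "vector_space sM" and sub: "\<And>X. module.subspace sM (M X)"
    and pin: "\<And>X Y g. g \<in> HomB Bas X Y (M Y) \<Longrightarrow> p X Y g \<in> M X"
    and padd: "\<And>X Y g h. g \<in> HomB Bas X Y (M Y) \<Longrightarrow> h \<in> HomB Bas X Y (M Y) \<Longrightarrow>
         p X Y (\<lambda>c. g c + h c) = p X Y g + p X Y h"
    and psc: "\<And>X Y k g. g \<in> HomB Bas X Y (M Y) \<Longrightarrow> p X Y (\<lambda>c. sM k (g c)) = sM k (p X Y g)"
    and pass: "\<And>X Y Z (\<phi> :: 'b \<Rightarrow> 'b \<Rightarrow> 'm). (\<forall>a\<in>Bas Y Z. \<forall>b\<in>Bas X Y. \<phi> a b \<in> M Z) \<Longrightarrow>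
         p X Z (\<lambda>c. if c \<in> Bas X Z
                      then (\<Sum>(a, b)\<in>dsupp Bas d X Y Z c. sM (d X Y Z c a b) (\<phi> a b))
                      else 0)
       = p X Y (\<lambda>b. if b \<in> Bas X Y
                      then p Y Z (\<lambda>a. if a \<in> Bas Y Z then \<phi> a b else 0)
                      else 0)"
    using cm unfolding contramod_def by blast+
  have md: "module sM" using vs module_iff_vector_space by blast
  have smem: "sM k x \<in> M X" if "x \<in> M X" for k x X
    using sub[of X] that unfolding module.subspace_def[OF md] by blast
  have zmem: "0 \<in> M X" for X
    using sub[of X] unfolding module.subspace_def[OF md] by blast
  have hom: "(\<lambda>c. if c \<in> Bas Y Q then sM (\<phi> c) m else 0) \<in> HomB Bas Y Q (M Q)" for Y \<phi>
    using smem[OF m] by (auto simp: HomB_def)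
  show ?thesis
    unfolding cmor_def
  proof (intro conjI allI ballI)
    show "yon Bas sM p Q m X x \<in> M X" for X x
      unfolding yon_def by (rule pin[OF hom])
    show "yon Bas sM p Q m X (x + y) = yon Bas sM p Q m X x + yon Bas sM p Q m X y" for X x y
    proof -
      have "(\<lambda>c. if c \<in> Bas X Q then sM ((x + y) c) m else 0)
         = (\<lambda>c. (if c \<in> Bas X Q then sM (x c) m else 0) + (if c \<in> Bas X Q then sM (y c) m else 0))"
        by (auto simp: fun_eq_iff module.scale_left_distrib[OF md])
      then show ?thesis unfolding yon_def using padd[OF hom hom] by simp
    qed
    show "yon Bas sM p Q m X (dscale k x) = sM k (yon Bas sM p Q m X x)" for X k x
    proof -
      have "(\<lambda>c. if c \<in> Bas X Q then sM (dscale k x c) m else 0)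
         = (\<lambda>c. sM k (if c \<in> Bas X Q then sM (x c) m else 0))"
        by (auto simp: fun_eq_iff dscale_def module.scale_zero_right[OF md] module.scale_scale[OF md])
      then show ?thesis unfolding yon_def using psc[OF hom] by simp
    qed
    show "yon Bas sM p Q m X (Hpi Bas d Q X Y g) =
       p X Y (\<lambda>c. if c \<in> Bas X Y then yon Bas sM p Q m Y (g c) else 0)"
      if g: "g \<in> HomB Bas X Y (Hdual Bas Q Y)" for X Y g
    proof -
      have "(\<lambda>c. if c \<in> Bas X Q then sM (Hpi Bas d Q X Y g c) m else 0)
         = (\<lambda>c. if c \<in> Bas X Q then (\<Sum>(a, b)\<in>dsupp Bas d X Y Q c. sM (d X Y Q c a b) (sM (g b a) m)) else 0)"
        by (auto simp: fun_eq_iff Hpi_def module.scale_sum_left[OF md] split_def module.scale_scale[OF md])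
      then have "yon Bas sM p Q m X (Hpi Bas d Q X Y g)
          = p X Y (\<lambda>b. if b \<in> Bas X Y then p Y Q (\<lambda>a. if a \<in> Bas Y Q then sM (g b a) m else 0) else 0)"
        unfolding yon_def using pass[of Y Q X "\<lambda>a b. sM (g b a) m"] smem[OF m] by simp
      then show ?thesis unfolding yon_def by simp
    qed
  qed
qed

lemma yon_eps:
  assumes cm: "contramod Bas d eps sM M p" and m: "m \<in> M Q"
  shows "yon Bas sM p Q m Q (\<lambda>c. if c \<in> Bas Q Q then eps Q c else 0) = m"
proof -
  have "p Q Q (\<lambda>c. if c \<in> Bas Q Q then sM (eps Q c) m else 0) = m"
    using cm m unfolding contramod_def by blast
  then show ?thesis unfolding yon_def by (simp cong: if_cong)
qed


lemma H_decomp: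
  fixes d :: "'o \<Rightarrow> 'o \<Rightarrow> 'o \<Rightarrow> 'b \<Rightarrow> 'b \<Rightarrow> 'b \<Rightarrow> 'k::field"
  assumes co: "coalg Bas d eps" and phi: "\<phi> \<in> Hdual Bas X Y"
  shows "Hpi Bas d X Y X (\<lambda>c. if c \<in> Bas Y X then dscale (\<phi> c) (\<lambda>c. if c \<in> Bas X X then eps X c else 0) else 0) = \<phi>"
  using phi counitB[OF co, of _ Y X \<phi>] by (auto simp: Hpi_def fun_eq_iff Hdual_def)

theorem proposition3p4:
  fixes Bas :: "'o \<Rightarrow> 'o \<Rightarrow> 'b set"
    and d :: "'o \<Rightarrow> 'o \<Rightarrow> 'o \<Rightarrow> 'b \<Rightarrow> 'b \<Rightarrow> 'b \<Rightarrow> 'k::field"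
    and eps :: "'o \<Rightarrow> 'b \<Rightarrow> 'k"
  assumes "coalg Bas d eps"
  shows "(\<forall>X. contramod Bas d eps dscale (Hdual Bas X) (Hpi Bas d X))
   \<and> (\<forall>X (sM :: 'k \<Rightarrow> 'm::ab_group_add \<Rightarrow> 'm) M pM (sN :: 'k \<Rightarrow> 'n::ab_group_add \<Rightarrow> 'n) N pN e f.
        contramod Bas d eps sM M pM \<and> contramod Bas d eps sN N pN
        \<and> cmor Bas sM M pM sN N pN e \<and> (\<forall>Y. e Y ` M Y = N Y)
        \<and> cmor Bas dscale (Hdual Bas X) (Hpi Bas d X) sN N pN f
        \<longrightarrow> (\<exists>g. cmor Bas dscale (Hdual Bas X) (Hpi Bas d X) sM M pM g
                 \<and> (\<forall>Y. \<forall>x\<in>Hdual Bas X Y. e Y (g Y x) = f Y x)))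
   \<and> (\<forall>(sM :: 'k \<Rightarrow> 'm \<Rightarrow> 'm) M pM (sN :: 'k \<Rightarrow> 'n \<Rightarrow> 'n) N pN f g.
        contramod Bas d eps sM M pM \<and> contramod Bas d eps sN N pN
        \<and> cmor Bas sM M pM sN N pN f \<and> cmor Bas sM M pM sN N pN g
        \<and> (\<exists>Y. \<exists>x\<in>M Y. f Y x \<noteq> g Y x)
        \<longrightarrow> (\<exists>X h. cmor Bas dscale (Hdual Bas X) (Hpi Bas d X) sM M pM h
                 \<and> (\<exists>Y. \<exists>x\<in>Hdual Bas X Y. f Y (h Y x) \<noteq> g Y (h Y x))))"
proof (intro conjI allI impI)
  show "contramod Bas d eps dscale (Hdual Bas X) (Hpi Bas d X)" for X
    by (rule H_contramod[OF assms])
next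
  fix X and sM :: "'k \<Rightarrow> 'm::ab_group_add \<Rightarrow> 'm" and M pM and sN :: "'k \<Rightarrow> 'n::ab_group_add \<Rightarrow> 'n" and N pN e f
  assume H: "contramod Bas d eps sM M pM \<and> contramod Bas d eps sN N pN
        \<and> cmor Bas sM M pM sN N pN e \<and> (\<forall>Y. e Y ` M Y = N Y)
        \<and> cmor Bas dscale (Hdual Bas X) (Hpi Bas d X) sN N pN f"
  then have cM: "contramod Bas d eps sM M pM" and cN: "contramod Bas d eps sN N pN"
    and ce: "cmor Bas sM M pM sN N pN e" and surj: "\<And>Y. e Y ` M Y = N Y"
    and cf: "cmor Bas dscale (Hdual Bas X) (Hpi Bas d X) sN N pN f" by auto
  define eX where "eX = (\<lambda>c. if c \<in> Bas X X then eps X c else 0)"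
  have eXm: "eX \<in> Hdual Bas X X" by (auto simp: eX_def Hdual_def)
  have "f X eX \<in> N X" using cf eXm unfolding cmor_def by blast
  then obtain m where m: "m \<in> M X" and em: "e X m = f X eX" using surj[of X] by force
  show "\<exists>g. cmor Bas dscale (Hdual Bas X) (Hpi Bas d X) sM M pM g
                 \<and> (\<forall>Y. \<forall>x\<in>Hdual Bas X Y. e Y (g Y x) = f Y x)"
  proof (intro exI conjI allI ballI)
    show "cmor Bas dscale (Hdual Bas X) (Hpi Bas d X) sM M pM (yon Bas sM pM X m)"
      by (rule yon_cmor[OF assms cM m])
    fix Y and \<phi> :: "'b \<Rightarrow> 'k" assume phi: "\<phi> \<in> Hdual Bas X Y"
    have vs: "vector_space sM" and sub: "module.subspace sM (M X)"
      using cM unfolding contramod_def by blast+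
    have md: "module sM" using vs module_iff_vector_space by blast
    have smem: "sM k m \<in> M X" for k
      using sub m unfolding module.subspace_def[OF md] by blast
    have hom: "(\<lambda>c. if c \<in> Bas Y X then sM (\<phi> c) m else 0) \<in> HomB Bas Y X (M X)"
      using smem by (auto simp: HomB_def)
    have "e Y (yon Bas sM pM X m Y \<phi>) = pN Y X (\<lambda>c. if c \<in> Bas Y X then e X (if c \<in> Bas Y X then sM (\<phi> c) m else 0) else 0)"
      unfolding yon_def using ce hom unfolding cmor_def by blast
    also have "\<dots> = pN Y X (\<lambda>c. if c \<in> Bas Y X then sN (\<phi> c) (f X eX) else 0)"
      using ce m em unfolding cmor_def by (auto intro!: arg_cong[where f="pN Y X"])
    finally have L: "e Y (yon Bas sM pM X m Y \<phi>) = pN Y X (\<lambda>c. if c \<in> Bas Y X then sN (\<phi> c) (f X eX) else 0)" .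
    have homH: "(\<lambda>c. if c \<in> Bas Y X then dscale (\<phi> c) eX else 0) \<in> HomB Bas Y X (Hdual Bas X X)"
      by (auto simp: HomB_def Hdual_def eX_def dscale_def)
    have "f Y \<phi> = f Y (Hpi Bas d X Y X (\<lambda>c. if c \<in> Bas Y X then dscale (\<phi> c) eX else 0))"
      using H_decomp[OF assms phi] unfolding eX_def by simp
    also have "\<dots> = pN Y X (\<lambda>c. if c \<in> Bas Y X then f X (if c \<in> Bas Y X then dscale (\<phi> c) eX else 0) else 0)"
      using cf homH unfolding cmor_def by blast
    also have "\<dots> = pN Y X (\<lambda>c. if c \<in> Bas Y X then sN (\<phi> c) (f X eX) else 0)"
      using cf eXm unfolding cmor_def by (auto intro!: arg_cong[where f="pN Y X"])
    finally show "e Y (yon Bas sM pM X m Y \<phi>) = f Y \<phi>" using L by simp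
  qed
next
  fix sM :: "'k \<Rightarrow> 'm \<Rightarrow> 'm" and M pM and sN :: "'k \<Rightarrow> 'n \<Rightarrow> 'n" and N pN f g
  assume H: "contramod Bas d eps sM M pM \<and> contramod Bas d eps sN N pN
        \<and> cmor Bas sM M pM sN N pN f \<and> cmor Bas sM M pM sN N pN g
        \<and> (\<exists>Y. \<exists>x\<in>M Y. f Y x \<noteq> g Y x)"
  then have cM: "contramod Bas d eps sM M pM" by auto
  from H obtain Y x where x: "x \<in> M Y" and ne: "f Y x \<noteq> g Y x" by auto
  define eY where "eY = (\<lambda>c. if c \<in> Bas Y Y then eps Y c else 0)"
  have eYm: "eY \<in> Hdual Bas Y Y" by (auto simp: eY_def Hdual_def)
  have hx: "yon Bas sM pM Y x Y eY = x" unfolding eY_def by (rule yon_eps[OF cM x])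
  show "\<exists>X h. cmor Bas dscale (Hdual Bas X) (Hpi Bas d X) sM M pM h
                 \<and> (\<exists>Y. \<exists>x\<in>Hdual Bas X Y. f Y (h Y x) \<noteq> g Y (h Y x))"
    using yon_cmor[OF assms cM x] eYm hx ne by metis
qed

end
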